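(* Let $M$ be the star matrix of a partition of the hypercube ${\bf Z}_q^n$ into subcubes all of the same dimension. Then in every column of $M$ each value $a\in{\bf Z}_q$ occurs the same number of times (entries $*$ are not counted).
   Context: A subcube of ${\bf Z}_q^n$ is obtained by fixing the values of some coordinates and letting the remaining coordinates run through all of ${\bf Z}_q$; its dimension is the number of free coordinates. Its star pattern is the vector of length $n$ over ${\bf Z}_q\cup\{*\}$ with the fixed value in each fixed coordinate and $*$ in each free coordinate. The star matrix of a partition of ${\bf Z}_q^n$ into subcubes (each vector lying in exactly one subcube) is the matrix whose rows are the star patterns of the subcubes of the partition. *)

theory Defs
  imports Main
begin

text \<open>Vectors of Z_q^n are lists of length n with entries in {0..<q}.
A star pattern is a list of length n over (nat option): None stands for *,
Some a for the fixed value a.\<close>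

definition hypercube :: "nat \<Rightarrow> nat \<Rightarrow> nat list set" where
  "hypercube q n = {x. length x = n \<and> (\<forall>i<n. x ! i < q)}"

definition star_pattern :: "nat \<Rightarrow> nat \<Rightarrow> nat option list \<Rightarrow> bool" where
  "star_pattern q n p \<longleftrightarrow> length p = n \<and> (\<forall>i<n. \<forall>a. p ! i = Some a \<longrightarrow> a < q)"

definition subcube :: "nat \<Rightarrow> nat \<Rightarrow> nat option list \<Rightarrow> nat list set" where
  "subcube q n p = {x \<in> hypercube q n. \<forall>i<n. \<forall>a. p ! i = Some a \<longrightarrow> x ! i = a}"

definition subcube_dim :: "nat \<Rightarrow> nat option list \<Rightarrow> nat" where
  "subcube_dim n p = card {i. i < n \<and> p ! i = None}"

definition is_star_matrix_of_partition :: "nat \<Rightarrow> nat \<Rightarrow> nat option list set \<Rightarrow> bool" where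
  "is_star_matrix_of_partition q n P \<longleftrightarrow>
     finite P \<and> (\<forall>p\<in>P. star_pattern q n p) \<and>
     (\<forall>x\<in>hypercube q n. \<exists>!p. p \<in> P \<and> x \<in> subcube q n p)"

end

theory Submission
  imports Defs
begin

definition SC :: "nat \<Rightarrow> nat option list \<Rightarrow> nat list set" where
  "SC q p = {x. length x = length p \<and> (\<forall>j<length p. x!j < q \<and> (\<forall>a. p!j = Some a \<longrightarrow> x!j = a))}"

lemma SC_None: "SC q (None # ps) = (\<lambda>(c,xs). c # xs) ` ({..<q} \<times> SC q ps)"
proof (rule set_eqI)
  fix x show "x \<in> SC q (None # ps) \<longleftrightarrow> x \<in> (\<lambda>(c,xs). c # xs) ` ({..<q} \<times> SC q ps)"
    by (cases x) (auto simp: SC_def All_less_Suc2)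
qed

lemma SC_Some: "SC q (Some a # ps) = (if a < q then (#) a ` SC q ps else {})"
proof (rule set_eqI)
  fix x show "x \<in> SC q (Some a # ps) \<longleftrightarrow> x \<in> (if a < q then (#) a ` SC q ps else {})"
    by (cases x) (auto simp: SC_def All_less_Suc2)
qed

lemma card_SC: "(\<forall>a. Some a \<in> set p \<longrightarrow> a < q) \<Longrightarrow>
  card (SC q p) = q ^ length (filter (\<lambda>z. z = None) p)"
proof (induction p)
  case Nil
  have "SC q [] = {[]}" by (auto simp: SC_def)
  then show ?case by simp
next
  case (Cons z ps)
  show ?case
  proof (cases z)
    case None
    have inj: "inj_on (\<lambda>(c,xs). c # xs) ({..<q} \<times> SC q ps)"
      by (auto simp: inj_on_def)
    show ?thesis using Cons None
      by (simp add: SC_None card_image[OF inj] card_cartesian_product)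
  next
    case (Some a)
    then show ?thesis using Cons
      by (simp add: SC_Some card_image)
  qed
qed

lemma subcube_SC: "star_pattern q n p \<Longrightarrow> subcube q n p = SC q p"
  by (auto simp: star_pattern_def subcube_def SC_def hypercube_def)

lemma card_subcube: "star_pattern q n p \<Longrightarrow> card (subcube q n p) = q ^ subcube_dim n p"
proof -
  assume sp: "star_pattern q n p"
  have "\<forall>a. Some a \<in> set p \<longrightarrow> a < q" using sp
    by (auto simp: star_pattern_def in_set_conv_nth)
  moreover have "length p = n" using sp by (simp add: star_pattern_def)
  ultimately show ?thesis using sp
    by (simp add: subcube_SC card_SC subcube_dim_def length_filter_conv_card eq_commute)
qed


lemma dim_upd: "i < n \<Longrightarrow> length p = n \<Longrightarrow> subcube_dim n (p[i := Some c]) = subcube_dim n (p[i := Some 0])"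
  unfolding subcube_dim_def by (rule arg_cong[where f=card]) (auto simp: nth_list_update)

lemma sub_upd: "i < n \<Longrightarrow> length p = n \<Longrightarrow> p ! i = None \<Longrightarrow>
   subcube q n p \<inter> {x \<in> hypercube q n. x ! i = c} = subcube q n (p[i := Some c])"
  unfolding subcube_def by (auto simp: nth_list_update)

lemma sp_upd: "star_pattern q n p \<Longrightarrow> c < q \<Longrightarrow> star_pattern q n (p[i := Some c])"
  unfolding star_pattern_def
proof (intro conjI allI impI)
  fix j a assume "length p = n \<and> (\<forall>i<n. \<forall>a. p ! i = Some a \<longrightarrow> a < q)" "c < q" "j < n"
    "p[i := Some c] ! j = Some a"
  then show "a < q" by (cases "i = j") auto
qed auto

theorem lemma2:
  fixes q n :: nat and P :: "nat option list set" and d :: nat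
  assumes "q \<ge> 2"
    and "is_star_matrix_of_partition q n P"
    and "\<forall>p\<in>P. subcube_dim n p = d"
  shows "\<forall>i<n. \<forall>a<q. \<forall>b<q.
           card {p \<in> P. p ! i = Some a} = card {p \<in> P. p ! i = Some b}"
proof (intro allI impI)
  fix i a b assume i: "i < n" and a: "a < q" and b: "b < q"
  have fin: "finite P" and sp: "\<And>p. p \<in> P \<Longrightarrow> star_pattern q n p"
    and uq: "\<And>x. x \<in> hypercube q n \<Longrightarrow> \<exists>!p. p \<in> P \<and> x \<in> subcube q n p"
    using assms(2) unfolding is_star_matrix_of_partition_def by auto
  have len: "\<And>p. p \<in> P \<Longrightarrow> length p = n" using sp by (simp add: star_pattern_def)
  define H where "H c = {x \<in> hypercube q n. x ! i = c}" for c
  define F where "F p = (if p ! i = None then q ^ subcube_dim n (p[i := Some 0]) else 0)" for p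
  have finsc: "finite (subcube q n p)" if "star_pattern q n p" for p
  proof (rule ccontr)
    assume "infinite (subcube q n p)"
    then have "card (subcube q n p) = 0" by simp
    moreover have "q ^ subcube_dim n p > 0" using assms(1) by simp
    ultimately show False using card_subcube[OF that] by simp
  qed
  have key: "card (H c) = (\<Sum>p\<in>P. F p) + card {p \<in> P. p ! i = Some c} * q ^ d" if c: "c < q" for c
  proof -
    have U: "H c = (\<Union>p\<in>P. subcube q n p \<inter> H c)"
    proof
      show "H c \<subseteq> (\<Union>p\<in>P. subcube q n p \<inter> H c)"
      proof
        fix x assume "x \<in> H c"
        then have "x \<in> hypercube q n" unfolding H_def by simp
        then obtain p where "p \<in> P" "x \<in> subcube q n p" using uq[of x] by auto
        then show "x \<in> (\<Union>p\<in>P. subcube q n p \<inter> H c)" using \<open>x \<in> H c\<close> by blast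
      qed
    qed blast
    have "card (H c) = card (\<Union>p\<in>P. subcube q n p \<inter> H c)"
      using U by (rule arg_cong)
    also have "\<dots> = (\<Sum>p\<in>P. card (subcube q n p \<inter> H c))"
    proof (rule card_UN_disjoint[OF fin])
      show "\<forall>p\<in>P. finite (subcube q n p \<inter> H c)" using finsc sp by blast
      show "\<forall>p\<in>P. \<forall>p'\<in>P. p \<noteq> p' \<longrightarrow> (subcube q n p \<inter> H c) \<inter> (subcube q n p' \<inter> H c) = {}"
      proof (intro ballI impI)
        fix p p' assume "p \<in> P" "p' \<in> P" "p \<noteq> p'"
        show "(subcube q n p \<inter> H c) \<inter> (subcube q n p' \<inter> H c) = {}"
        proof (rule ccontr)
          assume "(subcube q n p \<inter> H c) \<inter> (subcube q n p' \<inter> H c) \<noteq> {}"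
          then obtain x where x: "x \<in> subcube q n p" "x \<in> subcube q n p'" "x \<in> hypercube q n"
            unfolding H_def by blast
          from uq[OF x(3)] x(1,2) \<open>p \<in> P\<close> \<open>p' \<in> P\<close> \<open>p \<noteq> p'\<close> show False by blast
        qed
      qed
    qed
    also have "\<dots> = (\<Sum>p\<in>P. F p + (if p ! i = Some c then q ^ d else 0))"
    proof (rule sum.cong[OF refl])
      fix p assume pP: "p \<in> P"
      show "card (subcube q n p \<inter> H c) = F p + (if p ! i = Some c then q ^ d else 0)"
      proof (cases "p ! i")
        case None
        then show ?thesis unfolding H_def F_def
          using sub_upd[OF i len[OF pP] None] card_subcube[OF sp_upd[OF sp[OF pP] c]]
            dim_upd[OF i len[OF pP], of c] by simp
      next
        case (Some c')
        show ?thesis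
        proof (cases "c' = c")
          case True
          then have "subcube q n p \<inter> H c = subcube q n p"
            using Some i unfolding H_def subcube_def by auto
          then show ?thesis using Some True card_subcube[OF sp[OF pP]] assms(3) pP
            unfolding F_def by simp
        next
          case False
          then have "subcube q n p \<inter> H c = {}"
            using Some i unfolding H_def subcube_def by auto
          then show ?thesis using Some False unfolding F_def by simp
        qed
      qed
    qed
    also have "\<dots> = (\<Sum>p\<in>P. F p) + card {p \<in> P. p ! i = Some c} * q ^ d"
      by (simp add: sum.distrib sum.If_cases fin Int_def)
    finally show ?thesis .
  qed
  define pa where "pa c = ((replicate n None)[i := Some c] :: nat option list)" for c
  have Hc: "H c = subcube q n (pa c)" for c
    unfolding H_def pa_def subcube_def using i by (auto simp: nth_list_update hypercube_def)
  have spa: "star_pattern q n (pa c)" if "c < q" for c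
    using that i unfolding pa_def star_pattern_def by (auto simp: nth_list_update)
  have "subcube_dim n (pa a) = subcube_dim n (pa b)"
    unfolding pa_def using dim_upd[of i n "replicate n None" a] dim_upd[of i n "replicate n None" b] i by simp
  then have "card (H a) = card (H b)"
    unfolding Hc using card_subcube[OF spa[OF a]] card_subcube[OF spa[OF b]] by simp
  then have "card {p \<in> P. p ! i = Some a} * q ^ d = card {p \<in> P. p ! i = Some b} * q ^ d"
    using key[OF a] key[OF b] by simp
  moreover have "q ^ d > 0" using assms(1) by simp
  ultimately show "card {p \<in> P. p ! i = Some a} = card {p \<in> P. p ! i = Some b}" using assms(1) by simp
qed

end
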